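(* Let $\mathbb{X}$ be a Banach space, $\varphi:\mathbb{X}\to\mathbb{R}\cup\{+\infty\}$ a proper lower semicontinuous function, $\mathbf{S}_\varphi:=\{x:\varphi(x)\le0\}$ and $\bar x\in\mathbf{S}_\varphi$. Assume ${\rm bd}(\mathbf{S}_\varphi)\subseteq\varphi^{-1}(0)$, $\varphi$ has the epigraphical Shapiro first order contact property at $\bar x$, and $\mathbf{S}_\varphi$ has the Shapiro first order contact property around $\bar x$. For $x\in\mathbb{X}$ put $S_x:=\{u\in\mathbb{X}:\varphi'_H(x;u)\le0\}$. (i) If there exist $\tau,\delta_0>0$ with $\mathbf{d}(x,\mathbf{S}_\varphi)\le\tau\max\{\varphi(x),0\}$ for all $x\in\mathbf{B}(\bar x,\delta_0)$, then there exists $\delta>0$ such that for every $x\in{\rm bd}(\mathbf{S}_\varphi)\cap\mathbf{B}(\bar x,\delta)$, $$\mathbf{d}(h,S_x)\le\tau\max\{\varphi'_H(x;h),0\}\quad\text{for all }h\in\mathbb{X}.$$ (ii) Suppose there is a neighborhood $U$ of $\bar x$ such that $\{h\in\mathbb{X}:\varphi'_H(x;h)=0\}\subseteq\mathbf{T}^{\mathbf B}(\mathbf{S}_\varphi,x)$ for all $x\in U\cap{\rm bd}(\mathbf{S}_\varphi)$. Then the inequality $\varphi(x)\le0$ has a local error bound at $\bar x$ if and only if there exist $\tau,\delta>0$ such that for every $x\in{\rm bd}(\mathbf{S}_\varphi)\cap\mathbf{B}(\bar x,\delta)$, $\mathbf{d}(h,S_x)\le\tau\max\{\varphi'_H(x;h),0\}$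 for all $h\in\mathbb{X}$.
   Context: $\mathbf{B}(a,\delta)$ is the open ball with center $a$ and radius $\delta$; ${\rm bd}$ denotes boundary; $\mathbf{d}(x,D):=\inf\{\|x-y\|:y\in D\}$. $\varphi'_H(x;h):=\liminf_{t\to0^+,\,h'\to h}\frac{\varphi(x+th')-\varphi(x)}{t}$. Bouligand tangent cone $\mathbf{T}^{\mathbf B}(C,c)$: all $v$ with $v_n\to v$, $t_n\downarrow0$, $c+t_nv_n\in C$. A closed set $C$ has the Shapiro first order contact property at $a\in C$ if for every $\varepsilon>0$ there is $\delta>0$ with $\mathbf{d}(x-u,\mathbf{T}^{\mathbf B}(C,u))\le\varepsilon\|x-u\|$ for all $x,u\in C\cap\mathbf{B}(a,\delta)$; around $\bar x$ means at every point of $C\cap U$ for some neighborhood $U$ of $\bar x$. Epigraphical Shapiro first order contact property at $\bar x$: ${\rm epi}(\varphi)\subseteq\mathbb{X}\times\mathbb{R}$ (norm $\|x\|+|\alpha|$) has the Shapiro first order contact property at $(\bar x,\varphi(\bar x))$. Local error bound at $\bar x$: there exist $\tau,\delta>0$ with $\mathbf{d}(x,\mathbf{S}_\varphi)\le\tau\max\{\varphi(x),0\}$ for all $x\in\mathbf{B}(\bar x,\delta)$. *)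

theory Defs
  imports "HOL-Analysis.Analysis"
begin

text \<open>Extended-real valued functions phi : X -> R \<union> {+\<infinity>} are modelled as
  functions into ereal that never take the value -\<infinity>.\<close>

definition proper_fun :: "('a \<Rightarrow> ereal) \<Rightarrow> bool" where
  "proper_fun f \<longleftrightarrow> (\<forall>x. f x \<noteq> -\<infinity>) \<and> (\<exists>x. f x \<noteq> \<infinity>)"

definition lsc_fun :: "('a::topological_space \<Rightarrow> ereal) \<Rightarrow> bool" where
  "lsc_fun f \<longleftrightarrow> (\<forall>x. f x \<le> Liminf (at x) f)"

text \<open>Distance to a set with the convention inf of the empty set = +\<infinity>.\<close>
definition edist_set :: "'a::metric_space \<Rightarrow> 'a set \<Rightarrow> ereal" where
  "edist_set x D = (INF y\<in>D. ereal (dist x y))"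

definition sublevel0 :: "('a \<Rightarrow> ereal) \<Rightarrow> 'a set" where
  "sublevel0 f = {x. f x \<le> 0}"

definition epi :: "('a \<Rightarrow> ereal) \<Rightarrow> ('a \<times> real) set" where
  "epi f = {(x, \<alpha>). f x \<le> ereal \<alpha>}"

definition hadamard_lower :: "('a::real_normed_vector \<Rightarrow> ereal) \<Rightarrow> 'a \<Rightarrow> 'a \<Rightarrow> ereal" where
  "hadamard_lower f x h =
     Liminf (at_right (0::real) \<times>\<^sub>F nhds h) (\<lambda>(t, h'). (f (x + t *\<^sub>R h') - f x) / ereal t)"

definition bouligand_cone :: "'a::real_normed_vector set \<Rightarrow> 'a \<Rightarrow> 'a set" where
  "bouligand_cone C c = {v. \<exists>vs ts. (vs \<longlonglongrightarrow> v) \<and> (ts \<longlonglongrightarrow> 0) \<and> (\<forall>n. ts n > 0)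
        \<and> (\<forall>n. c + ts n *\<^sub>R vs n \<in> C)}"

text \<open>Shapiro first order contact property of C at a, measured with a norm N
  (N is used for balls, for the distance and for the right-hand side;
  the tangent cone only depends on the (common) topology).\<close>
definition shapiro_at_N :: "('a::real_normed_vector \<Rightarrow> real) \<Rightarrow> 'a set \<Rightarrow> 'a \<Rightarrow> bool" where
  "shapiro_at_N N C a \<longleftrightarrow> (\<forall>\<epsilon>>0. \<exists>\<delta>>0. \<forall>x\<in>C. \<forall>u\<in>C. N (x - a) < \<delta> \<longrightarrow> N (u - a) < \<delta> \<longrightarrow>
      (INF v\<in>bouligand_cone C u. ereal (N (x - u - v))) \<le> ereal (\<epsilon> * N (x - u)))"

definition shapiro_at :: "'a::real_normed_vector set \<Rightarrow> 'a \<Rightarrow> bool" where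
  "shapiro_at C a \<longleftrightarrow> shapiro_at_N norm C a"

definition shapiro_around :: "'a::real_normed_vector set \<Rightarrow> 'a \<Rightarrow> bool" where
  "shapiro_around C a \<longleftrightarrow> (\<exists>U. open U \<and> a \<in> U \<and> (\<forall>u\<in>C \<inter> U. shapiro_at C u))"

definition epi_shapiro_at :: "('a::real_normed_vector \<Rightarrow> ereal) \<Rightarrow> 'a \<Rightarrow> bool" where
  "epi_shapiro_at f a \<longleftrightarrow>
     shapiro_at_N (\<lambda>(x, \<alpha>). norm x + \<bar>\<alpha>\<bar>) (epi f) (a, real_of_ereal (f a))"

definition local_error_bound :: "('a::real_normed_vector \<Rightarrow> ereal) \<Rightarrow> 'a \<Rightarrow> bool" where
  "local_error_bound f a \<longleftrightarrow> (\<exists>\<tau>>0. \<exists>\<delta>>0. \<forall>x\<in>ball a \<delta>.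
      edist_set x (sublevel0 f) \<le> ereal \<tau> * max (f x) 0)"

end

theory Submission
  imports Defs
begin


lemma edist_le: "y \<in> D \<Longrightarrow> edist_set x D \<le> ereal (dist x y)"
  unfolding edist_set_def by (rule INF_lower)

lemma edist_lessD: "edist_set x D < ereal c \<Longrightarrow> \<exists>y\<in>D. dist x y < c"
  unfolding edist_set_def by (auto simp: INF_less_iff)

lemma cone_scale:
  fixes v :: "'a::real_normed_vector"
  assumes "v \<in> bouligand_cone C c" "r > 0"
  shows "r *\<^sub>R v \<in> bouligand_cone C c"
proof -
  from assms(1) obtain vs ts where h: "vs \<longlonglongrightarrow> v" "ts \<longlonglongrightarrow> 0" "\<forall>n. ts n > 0" "\<forall>n. c + ts n *\<^sub>R vs n \<in> C"
    unfolding bouligand_cone_def by blast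
  have "(\<lambda>n. r *\<^sub>R vs n) \<longlonglongrightarrow> r *\<^sub>R v" using h(1) by (intro tendsto_intros)
  moreover have "(\<lambda>n. ts n / r) \<longlonglongrightarrow> 0" using h(2) tendsto_divide_zero by blast
  moreover have "\<forall>n. ts n / r > 0" using h(3) assms(2) by simp
  moreover have "\<forall>n. c + (ts n / r) *\<^sub>R (r *\<^sub>R vs n) \<in> C" using h(4) assms(2) by simp
  ultimately show ?thesis unfolding bouligand_cone_def by blast
qed

lemma Liminf_le_seq:
  fixes f :: "'b \<Rightarrow> ereal"
  assumes "filterlim g F sequentially" "\<And>n. f (g n) \<le> ereal (b n)" "b \<longlonglongrightarrow> \<beta>"
  shows "Liminf F f \<le> ereal \<beta>"
proof (rule ccontr)
  assume "\<not> ?thesis"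
  then have "ereal \<beta> < Liminf F f" by simp
  then obtain z where z: "ereal \<beta> < ereal z" "ereal z < Liminf F f" using ereal_dense2 by blast
  have "eventually (\<lambda>x. ereal z < f x) F"
    using le_Liminf_iff[THEN iffD1, OF order_refl] z(2) by blast
  then have e1: "eventually (\<lambda>n. ereal z < f (g n)) sequentially"
    using eventually_compose_filterlim assms(1) by blast
  have e2: "eventually (\<lambda>n. b n < z) sequentially"
    using order_tendstoD(2)[OF assms(3)] z(1) by simp
  have "eventually (\<lambda>n. False) sequentially"
    using e1 e2
  proof eventually_elim
    case (elim n)
    then have "ereal z < ereal (b n)" using assms(2)[of n] by (meson less_le_trans)
    then show ?case using elim by simp
  qed
  then show False by simp
qed

lemma seq_filterlim:
  assumes "vs \<longlonglongrightarrow> v" "ts \<longlonglongrightarrow> 0" "\<forall>n. ts n > (0::real)"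
  shows "filterlim (\<lambda>n. (ts n, vs n)) (at_right 0 \<times>\<^sub>F nhds v) sequentially"
proof -
  have "filterlim ts (at_right 0) sequentially"
    using tendsto_imp_filterlim_at_right[OF assms(2)] assms(3) by simp
  then show ?thesis using filterlim_Pair assms(1) by blast
qed

lemma div_nonpos: "(a::ereal) \<le> 0 \<Longrightarrow> (t::real) > 0 \<Longrightarrow> a / ereal t \<le> 0"
  by (metis ereal_divide_right_mono ereal_divide_zero_left ereal_less(2))

lemma div_le: "(a::ereal) \<le> ereal (t*b) \<Longrightarrow> (t::real) > 0 \<Longrightarrow> a / ereal t \<le> ereal b"
  by (simp add: ereal_divide_le_pos)

lemma div_less: "(a::ereal) / ereal t < ereal c \<Longrightarrow> (t::real) > 0 \<Longrightarrow> a \<noteq> -\<infinity> \<Longrightarrow> a < ereal (c*t)"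
  by (metis ereal_divide_Infty(1) ereal_divide_ereal ereal_divide_less_iff
    ereal_less(2) ereal_less_PInfty ereal_uminus_zero_iff times_ereal.simps(1))

lemma cone_sub_S:
  fixes \<phi> :: "'a::real_normed_vector \<Rightarrow> ereal"
  assumes "\<phi> u = 0" "v \<in> bouligand_cone (sublevel0 \<phi>) u"
  shows "hadamard_lower \<phi> u v \<le> 0"
proof -
  obtain vs ts where h: "vs \<longlonglongrightarrow> v" "ts \<longlonglongrightarrow> 0" "\<forall>n. ts n > 0" "\<forall>n. u + ts n *\<^sub>R vs n \<in> sublevel0 \<phi>"
    using assms(2) unfolding bouligand_cone_def by blast
  have "Liminf (at_right 0 \<times>\<^sub>F nhds v) (\<lambda>(t, h'). (\<phi> (u + t *\<^sub>R h') - \<phi> u) / ereal t) \<le> ereal 0"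
  proof (rule Liminf_le_seq[where g="\<lambda>n. (ts n, vs n)" and b="\<lambda>n. 0"])
    show "filterlim (\<lambda>n. (ts n, vs n)) (at_right 0 \<times>\<^sub>F nhds v) sequentially"
      using seq_filterlim[OF h(1-3)] .
    fix n
    show "(\<lambda>(t, h'). (\<phi> (u + t *\<^sub>R h') - \<phi> u) / ereal t) (ts n, vs n) \<le> ereal 0"
      using h(3,4) assms(1) div_nonpos[of "\<phi> (u + ts n *\<^sub>R vs n)" "ts n"] by (auto simp: sublevel0_def zero_ereal_def[symmetric])
  qed simp
  then show ?thesis unfolding hadamard_lower_def by (simp add: zero_ereal_def)
qed

lemma epi_cone_deriv:
  fixes \<phi> :: "'a::real_normed_vector \<Rightarrow> ereal"
  assumes "\<phi> u = 0" "(w, \<beta>) \<in> bouligand_cone (epi \<phi>) (u, 0)"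
  shows "hadamard_lower \<phi> u w \<le> ereal \<beta>"
proof -
  obtain vs ts where h: "vs \<longlonglongrightarrow> (w, \<beta>)" "ts \<longlonglongrightarrow> 0" "\<forall>n. ts n > 0" "\<forall>n. (u, 0) + ts n *\<^sub>R vs n \<in> epi \<phi>"
    using assms(2) unfolding bouligand_cone_def by blast
  have f: "(\<lambda>n. fst (vs n)) \<longlonglongrightarrow> w" using tendsto_fst[OF h(1)] by simp
  have s: "(\<lambda>n. snd (vs n)) \<longlonglongrightarrow> \<beta>" using tendsto_snd[OF h(1)] by simp
  have "Liminf (at_right 0 \<times>\<^sub>F nhds w) (\<lambda>(t, h'). (\<phi> (u + t *\<^sub>R h') - \<phi> u) / ereal t) \<le> ereal \<beta>"
  proof (rule Liminf_le_seq[where g="\<lambda>n. (ts n, fst (vs n))" and b="\<lambda>n. snd (vs n)"])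
    show "filterlim (\<lambda>n. (ts n, fst (vs n))) (at_right 0 \<times>\<^sub>F nhds w) sequentially"
      using seq_filterlim[OF f h(2,3)] .
    fix n
    have "\<phi> (u + ts n *\<^sub>R fst (vs n)) \<le> ereal (ts n * snd (vs n))"
      using h(4)[rule_format, of n] by (cases "vs n") (auto simp: epi_def)
    then show "(\<lambda>(t, h'). (\<phi> (u + t *\<^sub>R h') - \<phi> u) / ereal t) (ts n, fst (vs n)) \<le> ereal (snd (vs n))"
      using h(3) assms(1) div_le by auto
  qed (rule s)
  then show ?thesis unfolding hadamard_lower_def by simp
qed

lemma Liminf_less_frequently:
  fixes f :: "_ \<Rightarrow> ereal"
  assumes "Liminf F f < c" shows "frequently (\<lambda>x. f x < c) F"
proof -
  from assms have "\<not> (c \<le> Liminf F f)" by simp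
  then obtain y where y: "y < c" "\<not> eventually (\<lambda>x. y < f x) F" unfolding le_Liminf_iff by auto
  show ?thesis unfolding frequently_def
  proof
    assume "eventually (\<lambda>x. \<not> f x < c) F"
    then have "eventually (\<lambda>x. y < f x) F" by eventually_elim (use y(1) in auto)
    then show False using y(2) by simp
  qed
qed

lemma frequently_prod_point:
  fixes w :: "'a::metric_space"
  assumes "frequently P (at_right (0::real) \<times>\<^sub>F nhds w)" "\<eta>1 > 0" "\<eta>2 > 0"
  shows "\<exists>t h'. 0 < t \<and> t < \<eta>1 \<and> dist h' w < \<eta>2 \<and> P (t, h')"
proof -
  have "eventually (\<lambda>p. 0 < fst p \<and> fst p < \<eta>1 \<and> dist (snd p) w < \<eta>2) (at_right 0 \<times>\<^sub>F nhds w)"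
    unfolding eventually_prod_filter
    apply (rule exI[of _ "\<lambda>t. t \<in> {0<..<\<eta>1}"], rule exI[of _ "\<lambda>h. dist h w < \<eta>2"])
    using eventually_at_right_real[OF assms(2)] assms(3) by (auto simp: eventually_nhds_metric)
  then have "frequently (\<lambda>p. 0 < fst p \<and> fst p < \<eta>1 \<and> dist (snd p) w < \<eta>2 \<and> P p) (at_right 0 \<times>\<^sub>F nhds w)"
    using frequently_rev_mp[OF assms(1)] by (smt (verit, ccfv_threshold) eventually_mono)
  then obtain p where "0 < fst p \<and> fst p < \<eta>1 \<and> dist (snd p) w < \<eta>2 \<and> P p" using frequently_ex by blast
  then show ?thesis by (cases p) auto
qed



lemma seq_inv_lim:
  fixes X :: "nat \<Rightarrow> 'a::real_normed_vector"
  assumes "\<And>n. norm (X n - L) < 1 / real (Suc n)"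
  shows "X \<longlonglongrightarrow> L"
proof -
  have "(\<lambda>n. 1 / real (Suc n)) \<longlonglongrightarrow> 0" using LIMSEQ_inverse_real_of_nat by (simp add: inverse_eq_divide)
  then have "(\<lambda>n. X n - L) \<longlonglongrightarrow> 0"
    by (rule Lim_null_comparison[rotated]) (intro always_eventually allI less_imp_le assms)
  then show ?thesis by (rule LIM_zero_cancel)
qed

lemma div_pos_ge: "0 \<le> (a::ereal) \<Longrightarrow> (t::real) > 0 \<Longrightarrow> 0 \<le> a / ereal t"
  by simp

lemma neg_deriv_tangent:
  fixes \<phi> :: "'a::real_normed_vector \<Rightarrow> ereal"
  assumes "\<phi> u = 0" "hadamard_lower \<phi> u w < 0"
  shows "w \<in> bouligand_cone (sublevel0 \<phi>) u"
proof -
  let ?F = "at_right (0::real) \<times>\<^sub>F nhds w"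
  let ?f = "\<lambda>(t, h'). (\<phi> (u + t *\<^sub>R h') - \<phi> u) / ereal t"
  have fr: "frequently (\<lambda>p. ?f p < 0) ?F"
    using Liminf_less_frequently assms(2) unfolding hadamard_lower_def by blast
  have "\<forall>n. \<exists>p. 0 < fst p \<and> fst p < 1 / real (Suc n) \<and> dist (snd p) w < 1 / real (Suc n) \<and> ?f p < 0"
  proof
    fix n
    from frequently_prod_point[OF fr, of "1 / real (Suc n)" "1 / real (Suc n)"]
    obtain t h' where "0 < t \<and> t < 1 / real (Suc n) \<and> dist h' w < 1 / real (Suc n) \<and> ?f (t, h') < 0"
      by auto
    then show "\<exists>p. 0 < fst p \<and> fst p < 1 / real (Suc n) \<and> dist (snd p) w < 1 / real (Suc n) \<and> ?f p < 0"
      by (intro exI[of _ "(t, h')"]) simp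
  qed
  from choice[OF this] obtain g where g0: "\<forall>n. 0 < fst (g n) \<and> fst (g n) < 1 / real (Suc n) \<and> dist (snd (g n)) w < 1 / real (Suc n) \<and> ?f (g n) < 0"
    by blast
  then have g: "\<And>n. 0 < fst (g n) \<and> fst (g n) < 1 / real (Suc n) \<and> dist (snd (g n)) w < 1 / real (Suc n) \<and> ?f (g n) < 0"
    by blast
  define ts where "ts n = fst (g n)" for n
  define vs where "vs n = snd (g n)" for n
  have "vs \<longlonglongrightarrow> w" using g by (intro seq_inv_lim) (simp add: vs_def dist_norm)
  moreover have "ts \<longlonglongrightarrow> 0"
  proof (rule seq_inv_lim)
    fix n show "norm (ts n - 0) < 1 / real (Suc n)" using g[of n] by (simp add: ts_def abs_of_pos)
  qed
  moreover have "\<forall>n. ts n > 0" using g ts_def by auto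
  moreover have "\<forall>n. u + ts n *\<^sub>R vs n \<in> sublevel0 \<phi>"
  proof
    fix n
    have "\<phi> (u + ts n *\<^sub>R vs n) / ereal (ts n) < 0" using g[of n] assms(1)
      by (cases "g n") (simp add: ts_def vs_def)
    moreover have "ts n > 0" using g[of n] unfolding ts_def by simp
    ultimately have "\<phi> (u + ts n *\<^sub>R vs n) \<le> 0"
      using div_pos_ge[of "\<phi> (u + ts n *\<^sub>R vs n)" "ts n"] by (meson less_imp_le not_le)
    then show "u + ts n *\<^sub>R vs n \<in> sublevel0 \<phi>" by (simp add: sublevel0_def)
  qed
  ultimately show ?thesis unfolding bouligand_cone_def by blast
qed

lemma sublevel_closed:
  fixes \<phi> :: "'a::metric_space \<Rightarrow> ereal"
  assumes "lsc_fun \<phi>" shows "closed (sublevel0 \<phi>)"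
  unfolding closed_def open_dist
proof (intro ballI)
  fix x assume "x \<in> - sublevel0 \<phi>"
  then have x0: "0 < \<phi> x" by (auto simp: sublevel0_def)
  also have "\<phi> x \<le> Liminf (at x) \<phi>" using assms lsc_fun_def by auto
  finally have "eventually (\<lambda>y. 0 < \<phi> y) (at x)" using le_Liminf_iff[THEN iffD1, OF order_refl] by auto
  then obtain d where "d>0" "\<forall>y. y \<noteq> x \<and> dist y x < d \<longrightarrow> 0 < \<phi> y" unfolding eventually_at by auto
  then show "\<exists>e>0. \<forall>y. dist y x < e \<longrightarrow> y \<in> - sublevel0 \<phi>" using x0
    by (intro exI[of _ d]) (auto simp: sublevel0_def not_le)
qed


lemma ekeland_tangent:
  fixes z u v :: "'a::real_normed_vector"
  assumes ek: "\<forall>y\<in>S. dist z u \<le> dist z y + \<kappa> * dist y u" and k: "\<kappa> \<ge> 0"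
    and v: "v \<in> bouligand_cone S u"
  shows "norm (z - u) \<le> norm (z - u - v) + \<kappa> * norm v"
proof -
  obtain vs ts where h: "vs \<longlonglongrightarrow> v" "ts \<longlonglongrightarrow> 0" "\<forall>n. ts n > 0" "\<forall>n. u + ts n *\<^sub>R vs n \<in> S"
    using v unfolding bouligand_cone_def by blast
  have ev: "eventually (\<lambda>n. norm (z - u) \<le> norm (z - u - v) + norm (vs n - v) + \<kappa> * norm (vs n)) sequentially"
  proof -
    have "eventually (\<lambda>n. ts n < 1) sequentially" using h(2) by (rule order_tendstoD) simp
    then show ?thesis
    proof eventually_elim
      case (elim n)
      define t where "t = ts n"
      have t0: "t > 0" "t < 1" using h(3) elim t_def by auto
      have "dist z u \<le> dist z (u + t *\<^sub>R vs n) + \<kappa> * dist (u + t *\<^sub>R vs n) u" using ek h(4) t_def by auto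
      then have 1: "norm (z-u) \<le> norm (z - u - t *\<^sub>R vs n) + \<kappa> * (t * norm (vs n))"
        using t0 by (simp add: dist_norm algebra_simps)
      have eq: "z - u - t *\<^sub>R vs n = (z - u - t *\<^sub>R v) + t *\<^sub>R (v - vs n)" by (simp add: algebra_simps)
      have "norm (z - u - t *\<^sub>R vs n) \<le> norm (z - u - t *\<^sub>R v) + norm (t *\<^sub>R (v - vs n))"
        unfolding eq by (rule norm_triangle_ineq)
      then have 2: "norm (z - u - t *\<^sub>R vs n) \<le> norm (z - u - t *\<^sub>R v) + t * norm (vs n - v)"
        using t0 by (simp add: norm_minus_commute)
      have "z - u - t *\<^sub>R v = (1 - t) *\<^sub>R (z-u) + t *\<^sub>R (z-u-v)" by (simp add: algebra_simps)
      then have 3: "norm (z - u - t *\<^sub>R v) \<le> (1 - t) * norm (z - u) + t * norm (z - u - v)"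
        using norm_triangle_ineq[of "(1 - t) *\<^sub>R (z-u)" "t *\<^sub>R (z-u-v)"] t0 by simp
      have 4: "(1 - t) * norm (z - u) = norm (z-u) - t * norm (z-u)" "\<kappa> * (t * norm (vs n)) = t * (\<kappa> * norm (vs n))"
        by (simp_all add: algebra_simps)
      from 1 2 3 4 have "t * norm (z-u) \<le> t * norm (z - u - v) + t * norm (vs n - v) + t * (\<kappa> * norm (vs n))"
        by linarith
      then have "t * norm (z-u) \<le> t * (norm (z - u - v) + norm (vs n - v) + \<kappa> * norm (vs n))"
        by (simp add: distrib_left)
      then show ?case using t0 by simp
    qed
  qed
  have "(\<lambda>n. norm (z - u - v) + norm (vs n - v) + \<kappa> * norm (vs n)) \<longlonglongrightarrow> norm (z - u - v) + norm (v - v) + \<kappa> * norm v"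
    using h(1) by (intro tendsto_intros)
  then show ?thesis using tendsto_le[OF trivial_limit_sequentially _ tendsto_const ev] by simp
qed



lemma ekeland_dist:
  fixes S :: "'a::{complete_space,metric_space} set"
  assumes S: "closed S" "y0 \<in> S" and k: "\<kappa> > 0"
  shows "\<exists>u\<in>S. dist z u \<le> dist z y0 \<and> (\<forall>y\<in>S. dist z u \<le> dist z y + \<kappa> * dist y u)"
proof -
  define A where "A y = {x\<in>S. dist z x + \<kappa> * dist x y \<le> dist z y}" for y
  have A_refl: "y \<in> A y" if "y \<in> S" for y using that by (simp add: A_def)
  have A_S: "A y \<subseteq> S" for y by (auto simp: A_def)
  have A_sub: "A x \<subseteq> A y" if "x \<in> A y" for x y
  proof
    fix w assume "w \<in> A x"
    then have w: "w \<in> S" "dist z w + \<kappa> * dist w x \<le> dist z x" by (auto simp: A_def)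
    have x: "dist z x + \<kappa> * dist x y \<le> dist z y" using that by (auto simp: A_def)
    have "\<kappa> * dist w y \<le> \<kappa> * (dist w x + dist x y)"
      using k dist_triangle[of w y x] by (intro mult_left_mono) auto
    then show "w \<in> A y" using w x by (auto simp: A_def distrib_left)
  qed
  have A_closed: "closed (A y)" for y
  proof -
    have "A y = S \<inter> {x. dist z x + \<kappa> * dist x y \<le> dist z y}" by (auto simp: A_def)
    moreover have "closed {x. dist z x + \<kappa> * dist x y \<le> dist z y}"
      by (intro closed_Collect_le continuous_intros)
    ultimately show ?thesis using S(1) by auto
  qed
  define m where "m y = Inf ((dist z) ` A y)" for y
  have bdd: "bdd_below ((dist z) ` A y)" for y by (rule bdd_belowI[of _ 0]) auto
  have m_le: "m y \<le> dist z x" if "x \<in> A y" for x y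
    unfolding m_def using that bdd by (intro cInf_lower) auto
  have ex: "\<exists>x. x \<in> A y \<and> dist z x < m y + e" if yS: "y \<in> S" and e0: "e > 0" for y e
  proof -
    have "Inf ((dist z) ` A y) < m y + e" using e0 by (simp add: m_def)
    then obtain d where "d \<in> (dist z) ` A y" "d < m y + e"
      using cInf_lessD[of "(dist z) ` A y"] A_refl[OF yS] by blast
    then show ?thesis by auto
  qed
  define nxt where "nxt n y = (SOME x. x \<in> A y \<and> dist z x < m y + (1/2)^n)" for n y
  have nxt: "nxt n y \<in> A y \<and> dist z (nxt n y) < m y + (1/2)^n" if "y \<in> S" for n y
    unfolding nxt_def by (rule someI_ex) (rule ex[OF that], simp)
  define ys where "ys = rec_nat y0 nxt"
  have ys0: "ys 0 = y0" and ysS: "ys (Suc n) = nxt n (ys n)" for n by (simp_all add: ys_def)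
  have ys_in: "ys n \<in> S" for n
  proof (induction n)
    case 0 then show ?case using S(2) ys0 by simp
  next
    case (Suc n) then show ?case using ysS[of n] nxt[OF Suc.IH, of n] A_S by auto
  qed
  have ys_A: "ys k \<in> A (ys n)" if "n \<le> k" for n k
    using that
  proof (induction k rule: dec_induct)
    case base then show ?case using A_refl[OF ys_in[of n]] .
  next
    case (step k) then show ?case using A_sub[OF step.IH] nxt[OF ys_in[of k], of k] ysS[of k] by auto
  qed
  have small: "\<kappa> * dist w (ys (Suc n)) < (1/2)^n" if "w \<in> A (ys (Suc n))" for w n
  proof -
    have "w \<in> A (ys n)" using that A_sub ys_A[of n "Suc n"] by auto
    then have "m (ys n) \<le> dist z w" by (rule m_le)
    moreover have "dist z (ys (Suc n)) < m (ys n) + (1/2)^n" using nxt[OF ys_in[of n]] ysS by simp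
    moreover have "dist z w + \<kappa> * dist w (ys (Suc n)) \<le> dist z (ys (Suc n))" using that by (simp add: A_def)
    ultimately show ?thesis by linarith
  qed
  have small2: "dist w (ys (Suc n)) < (1/2)^n / \<kappa>" if "w \<in> A (ys (Suc n))" for w n
    using small[OF that] k by (simp add: field_simps)
  have "Cauchy ys"
  proof (rule metric_CauchyI)
    fix e :: real assume e: "e > 0"
    obtain N where N: "(1/2::real)^N < e * \<kappa> / 2" using real_arch_pow_inv[of "e * \<kappa> / 2" "1/2"] e k by auto
    have "dist (ys p) (ys q) < e" if "p \<ge> Suc N" "q \<ge> Suc N" for p q
    proof -
      have "dist (ys p) (ys (Suc N)) < (1/2)^N / \<kappa>" using small2[OF ys_A[of "Suc N" p]] that by blast
      moreover have "dist (ys q) (ys (Suc N)) < (1/2)^N / \<kappa>" using small2[OF ys_A[of "Suc N" q]] that by blast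
      moreover have "(1/2::real)^N / \<kappa> < e / 2" using N k by (simp add: field_simps)
      ultimately show ?thesis using dist_triangle[of "ys p" "ys q" "ys (Suc N)"] dist_commute[of "ys q" "ys (Suc N)"] by linarith
    qed
    then show "\<exists>M. \<forall>p\<ge>M. \<forall>q\<ge>M. dist (ys p) (ys q) < e" by blast
  qed
  then obtain u where u: "ys \<longlonglongrightarrow> u" using Cauchy_convergent convergent_def by blast
  have uA: "u \<in> A (ys n)" for n
  proof -
    have l: "(\<lambda>k. ys (k + n)) \<longlonglongrightarrow> u" using u by (rule LIMSEQ_ignore_initial_segment)
    have i: "ys (k + n) \<in> A (ys n)" for k by (rule ys_A) simp
    show ?thesis by (rule closed_sequentially[OF A_closed i l])
  qed
  have uS: "u \<in> S" using uA[of 0] A_S by blast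
  have "dist z u \<le> dist z y0" using uA[of 0] ys0 k by (simp add: A_def) (smt (verit) mult_nonneg_nonneg zero_le_dist)
  moreover have "dist z u \<le> dist z y + \<kappa> * dist y u" if y: "y \<in> S" for y
  proof (rule ccontr)
    assume nt: "\<not> dist z u \<le> dist z y + \<kappa> * dist y u"
    then have "y \<in> A u" using y by (auto simp: A_def dist_commute)
    then have yA: "y \<in> A (ys (Suc n))" for n using A_sub[OF uA[of "Suc n"]] by blast
    have "dist y u = 0"
    proof (rule ccontr)
      assume "dist y u \<noteq> 0"
      then have d: "dist y u > 0" by simp
      obtain N where N: "(1/2::real)^N < dist y u * \<kappa> / 2" using real_arch_pow_inv[of "dist y u * \<kappa> / 2" "1/2"] d k by auto
      have "dist y (ys (Suc N)) < (1/2)^N / \<kappa>" using small2[OF yA] .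
      moreover have "dist u (ys (Suc N)) < (1/2)^N / \<kappa>" using small2[OF uA] .
      moreover have "(1/2::real)^N / \<kappa> < dist y u / 2" using N k by (simp add: field_simps)
      ultimately show False using dist_triangle[of y u "ys (Suc N)"] dist_commute[of u "ys (Suc N)"] by linarith
    qed
    then have "y = u" by simp
    then show False using nt by simp
  qed
  ultimately show ?thesis using uS by blast
qed



lemma ereal_mult_less_aux: "0 \<le> (a::ereal) \<Longrightarrow> a < ereal b \<Longrightarrow> (\<tau>::real) > 0 \<Longrightarrow> ereal \<tau> * a < ereal (\<tau> * b)"
  by (smt (verit, del_insts) PInfty_neq_ereal(1) ereal_divide ereal_less(2)
    ereal_less_divide_pos nonzero_mult_div_cancel_left)

lemma ereal_rhs_nonneg: "(0::ereal) \<le> ereal \<tau> * max a 0" if "\<tau> > 0"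
  using that by (simp add: order_less_imp_le)

lemma part_i_core:
  fixes \<phi> :: "'a::real_normed_vector \<Rightarrow> ereal"
  assumes x0: "\<phi> x = 0" and nm: "\<forall>y. \<phi> y \<noteq> -\<infinity>"
    and shx: "shapiro_at (sublevel0 \<phi>) x" and tau: "\<tau> > 0" and rho: "\<rho> > 0"
    and eb: "\<forall>y\<in>ball x \<rho>. edist_set y (sublevel0 \<phi>) \<le> ereal \<tau> * max (\<phi> y) 0"
    and c: "c > 0" "hadamard_lower \<phi> x h < ereal c" and e: "e > 0"
  shows "edist_set h {u. hadamard_lower \<phi> x u \<le> 0} < ereal (\<tau> * c + e)"
proof -
  let ?S = "sublevel0 \<phi>"
  define K where "K = norm h + 2 + \<tau> * c"
  have tc: "\<tau> * c > 0" using tau c by simp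
  have K: "K > 0" using tc norm_ge_zero[of h] unfolding K_def by linarith
  define es where "es = e / (2 * K)"
  have es: "es > 0" using e K by (simp add: es_def)
  have esK: "es * K = e / 2" using K by (simp add: es_def)
  obtain ds where ds: "ds > 0" and dsp: "\<forall>y\<in>?S. \<forall>u\<in>?S. norm (y - x) < ds \<longrightarrow> norm (u - x) < ds \<longrightarrow>
      (INF v\<in>bouligand_cone ?S u. ereal (norm (y - u - v))) \<le> ereal (es * norm (y - u))"
    using shx es unfolding shapiro_at_def shapiro_at_N_def by blast
  define \<eta>2 where "\<eta>2 = min 1 (e/2)"
  define \<eta>1 where "\<eta>1 = min \<rho> ds / K"
  have \<eta>1: "\<eta>1 > 0" using rho ds K by (simp add: \<eta>1_def)
  have \<eta>2: "\<eta>2 > 0" using e by (simp add: \<eta>2_def)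
  have fr: "frequently (\<lambda>p. (\<lambda>(t, h'). (\<phi> (x + t *\<^sub>R h') - \<phi> x) / ereal t) p < ereal c) (at_right 0 \<times>\<^sub>F nhds h)"
    using Liminf_less_frequently c(2) unfolding hadamard_lower_def by blast
  obtain t h' where th: "0 < t" "t < \<eta>1" "dist h' h < \<eta>2" "(\<phi> (x + t *\<^sub>R h') - \<phi> x) / ereal t < ereal c"
    using frequently_prod_point[OF fr \<eta>1 \<eta>2] by auto
  define y where "y = x + t *\<^sub>R h'"
  have dhh: "norm (h - h') < \<eta>2" using th(3) by (simp add: dist_norm norm_minus_commute)
  have nh': "norm h' < norm h + 1"
    using norm_triangle_ineq[of h "h' - h"] th(3) by (simp add: dist_norm \<eta>2_def)
  have tK: "t * K < min \<rho> ds" using th(2) K by (simp add: \<eta>1_def field_simps)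
  have "\<phi> y / ereal t < ereal c" using th(4) x0 by (simp add: y_def)
  then have phiy: "\<phi> y < ereal (c * t)" using div_less th(1) nm by blast
  have yx: "norm (y - x) = t * norm h'" using th(1) by (simp add: y_def)
  have "t * norm h' \<le> t * (norm h + 1)" using nh' th(1) by simp
  moreover have "t * (norm h + 1) \<le> t * K" using th(1) tau c by (simp add: K_def)
  ultimately have yx2: "norm (y - x) < min \<rho> ds" using yx tK by linarith
  then have "y \<in> ball x \<rho>" by (simp add: dist_norm norm_minus_commute)
  then have "edist_set y ?S \<le> ereal \<tau> * max (\<phi> y) 0" using eb by blast
  also have "\<dots> < ereal (\<tau> * (c * t))"
    using ereal_mult_less_aux[of "max (\<phi> y) 0" "c * t" \<tau>] phiy tau c th(1) by simp
  finally obtain s where s: "s \<in> ?S" "dist y s < \<tau> * (c * t)" using edist_lessD by blast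
  have sx_eq: "s - x = (y - x) + (s - y)" by simp
  have "norm (s - x) \<le> norm (y - x) + norm (s - y)" unfolding sx_eq by (rule norm_triangle_ineq)
  moreover have "norm (s - y) < \<tau> * (c * t)" using s(2) by (simp add: dist_norm norm_minus_commute)
  ultimately have sx: "norm (s - x) < t * (norm h + 1 + \<tau> * c)"
    using yx \<open>t * norm h' \<le> t * (norm h + 1)\<close> by (simp add: algebra_simps)
  have "t * (norm h + 1 + \<tau> * c) \<le> t * K" using th(1) by (simp add: K_def)
  then have sx2: "norm (s - x) < ds" using sx tK by linarith
  have xS: "x \<in> ?S" using x0 by (simp add: sublevel0_def)
  have "(INF v\<in>bouligand_cone ?S x. ereal (norm (s - x - v))) \<le> ereal (es * norm (s - x))"
    using dsp s(1) xS sx2 ds by auto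
  also have "\<dots> < ereal (es * norm (s - x) + es * t)" using es th(1) by simp
  finally obtain v where v: "v \<in> bouligand_cone ?S x" "norm (s - x - v) < es * norm (s - x) + es * t"
    by (auto simp: INF_less_iff)
  define v' where "v' = (1 / t) *\<^sub>R v"
  have "v' \<in> bouligand_cone ?S x" unfolding v'_def using cone_scale[OF v(1)] th(1) by simp
  then have v'S: "v' \<in> {u. hadamard_lower \<phi> x u \<le> 0}" using cone_sub_S[of \<phi> x, OF x0] by blast
  have eq1: "t *\<^sub>R (h - v') = t *\<^sub>R (h - h') + (y - s) + (s - x - v)"
    using th(1) by (simp add: v'_def y_def algebra_simps)
  have "norm (t *\<^sub>R (h - v')) \<le> norm (t *\<^sub>R (h - h')) + norm (y - s) + norm (s - x - v)"
    unfolding eq1 by (meson norm_triangle_le norm_triangle_ineq add_mono order_refl)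
  then have n1: "t * norm (h - v') \<le> t * norm (h - h') + norm (y - s) + norm (s - x - v)"
    using th(1) by simp
  have n2: "t * norm (h - h') \<le> t * (e/2)" using dhh th(1) by (intro mult_left_mono) (auto simp: \<eta>2_def)
  have n3: "norm (y - s) < \<tau> * (c * t)" using s(2) by (simp add: dist_norm)
  have "es * norm (s - x) \<le> es * (t * (norm h + 1 + \<tau> * c))" using sx es by (intro mult_left_mono) auto
  then have n4: "norm (s - x - v) < es * (t * (norm h + 1 + \<tau> * c)) + es * t" using v(2) by linarith
  have "es * (t * (norm h + 1 + \<tau> * c)) + es * t = t * (es * K)"
    by (simp add: K_def algebra_simps)
  then have n5: "es * (t * (norm h + 1 + \<tau> * c)) + es * t = t * (e/2)"
    using esK by simp
  have "t * norm (h - v') < t * (\<tau> * c + e)"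
    using n1 n2 n3 n4 n5 by (simp add: algebra_simps)
  then have "norm (h - v') < \<tau> * c + e" using th(1) by simp
  then have "edist_set h {u. hadamard_lower \<phi> x u \<le> 0} \<le> ereal (dist h v')"
    using edist_le[OF v'S] by blast
  also have "\<dots> < ereal (\<tau> * c + e)" using \<open>norm (h - v') < \<tau> * c + e\<close> by (simp add: dist_norm)
  finally show ?thesis .
qed



lemma part_i:
  fixes \<phi> :: "'a::real_normed_vector \<Rightarrow> ereal"
  assumes fr: "frontier (sublevel0 \<phi>) \<subseteq> \<phi> -` {0}"
    and sh: "shapiro_around (sublevel0 \<phi>) xbar"
    and nm: "\<forall>y. \<phi> y \<noteq> -\<infinity>"
    and tau: "\<tau> > 0" and d0: "\<delta>0 > 0"
    and eb: "\<forall>x\<in>ball xbar \<delta>0. edist_set x (sublevel0 \<phi>) \<le> ereal \<tau> * max (\<phi> x) 0"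
  shows "\<exists>\<delta>>0. \<forall>x\<in>frontier (sublevel0 \<phi>) \<inter> ball xbar \<delta>. \<forall>h.
            edist_set h {u. hadamard_lower \<phi> x u \<le> 0} \<le> ereal \<tau> * max (hadamard_lower \<phi> x h) 0"
proof -
  obtain U where U: "open U" "xbar \<in> U" "\<forall>u\<in>sublevel0 \<phi> \<inter> U. shapiro_at (sublevel0 \<phi>) u"
    using sh unfolding shapiro_around_def by blast
  obtain dU where dU: "dU > 0" "ball xbar dU \<subseteq> U" using U(1,2) open_contains_ball by blast
  define \<delta> where "\<delta> = min \<delta>0 dU"
  have "\<delta> > 0" using d0 dU by (simp add: \<delta>_def)
  moreover have "edist_set h {u. hadamard_lower \<phi> x u \<le> 0} \<le> ereal \<tau> * max (hadamard_lower \<phi> x h) 0"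
    if x: "x \<in> frontier (sublevel0 \<phi>)" "x \<in> ball xbar \<delta>" for x h
  proof -
    have x0: "\<phi> x = 0" using fr x(1) by auto
    have xS: "x \<in> sublevel0 \<phi>" using x0 by (simp add: sublevel0_def)
    have xU: "x \<in> U" using x(2) dU(2) by (auto simp: \<delta>_def)
    have shx: "shapiro_at (sublevel0 \<phi>) x" using U(3) xS xU by blast
    have "x \<in> ball xbar \<delta>0" using x(2) by (simp add: \<delta>_def)
    then obtain \<rho> where rho: "\<rho> > 0" "ball x \<rho> \<subseteq> ball xbar \<delta>0" using open_contains_ball open_ball by blast
    have eb': "\<forall>y\<in>ball x \<rho>. edist_set y (sublevel0 \<phi>) \<le> ereal \<tau> * max (\<phi> y) 0" using eb rho(2) by blast
    define M where "M = max (hadamard_lower \<phi> x h) 0"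
    show ?thesis
    proof (cases "M = \<infinity>")
      case True then show ?thesis using tau by (simp add: M_def[symmetric])
    next
      case False
      have "M \<ge> 0" by (simp add: M_def)
      with False obtain m where m: "M = ereal m" "m \<ge> 0" by (cases M) auto
      show ?thesis unfolding M_def[symmetric] m(1)
      proof (rule ereal_le_epsilon2)
        fix e :: real assume e: "e > 0"
        define c where "c = m + e / (2 * \<tau>)"
        have c: "c > 0" using m(2) e tau by (simp add: c_def add_nonneg_pos)
        have "hadamard_lower \<phi> x h \<le> M" by (simp add: M_def)
        also have "M < ereal c" using m e tau by (simp add: c_def)
        finally have hc: "hadamard_lower \<phi> x h < ereal c" .
        have "edist_set h {u. hadamard_lower \<phi> x u \<le> 0} < ereal (\<tau> * c + e/2)"
          using part_i_core[OF x0 nm shx tau rho(1) eb' c hc] e by simp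
        also have "\<tau> * c + e/2 = \<tau> * m + e" using tau by (simp add: c_def field_simps)
        finally show "edist_set h {u. hadamard_lower \<phi> x u \<le> 0} \<le> ereal \<tau> * ereal m + ereal e" by simp
      qed
    qed
  qed
  ultimately show ?thesis by blast
qed



lemma part_ii_rev:
  fixes \<phi> :: "'a::banach \<Rightarrow> ereal"
  assumes lsc: "lsc_fun \<phi>" and xb: "xbar \<in> sublevel0 \<phi>"
    and fr: "frontier (sublevel0 \<phi>) \<subseteq> \<phi> -` {0}"
    and esh: "epi_shapiro_at \<phi> xbar"
    and U: "open U" "xbar \<in> U" "\<forall>x\<in>U \<inter> frontier (sublevel0 \<phi>). {h. hadamard_lower \<phi> x h = 0} \<subseteq> bouligand_cone (sublevel0 \<phi>) x"
    and tau: "\<tau> > 0" and d1: "\<delta>1 > 0"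
    and db: "\<forall>x\<in>frontier (sublevel0 \<phi>) \<inter> ball xbar \<delta>1. \<forall>h. edist_set h {u. hadamard_lower \<phi> x u \<le> 0} \<le> ereal \<tau> * max (hadamard_lower \<phi> x h) 0"
  shows "local_error_bound \<phi> xbar"
proof (cases "xbar \<in> interior (sublevel0 \<phi>)")
  case True
  then obtain r where r: "r > 0" "ball xbar r \<subseteq> sublevel0 \<phi>" using mem_interior by blast
  have "edist_set x (sublevel0 \<phi>) \<le> ereal 1 * max (\<phi> x) 0" if "x \<in> ball xbar r" for x
  proof -
    have "edist_set x (sublevel0 \<phi>) \<le> ereal (dist x x)" using edist_le r(2) that by blast
    also have "\<dots> = 0" by simp
    also have "0 \<le> ereal 1 * max (\<phi> x) 0" using ereal_rhs_nonneg[of 1] by simp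
    finally show ?thesis .
  qed
  then show ?thesis unfolding local_error_bound_def using r(1) by (intro exI[of _ 1] exI[of _ r]) auto
next
  case False
  let ?S = "sublevel0 \<phi>"
  let ?N = "\<lambda>(x::'a, \<alpha>::real). norm x + \<bar>\<alpha>\<bar>"
  have xfr: "xbar \<in> frontier ?S" using False xb closure_subset unfolding frontier_def by auto
  have x0: "\<phi> xbar = 0" using fr xfr by auto
  have Scl: "closed ?S" using sublevel_closed[OF lsc] .
  define \<epsilon> where "\<epsilon> = 1 / (8 * (1 + \<tau>))"
  have \<epsilon>: "\<epsilon> > 0" using tau by (simp add: \<epsilon>_def)
  have \<epsilon>1: "(1 + \<tau>) * \<epsilon> = 1/8" using tau by (simp add: \<epsilon>_def)
  obtain \<delta>e where \<delta>e: "\<delta>e > 0" and shp: "\<forall>p\<in>epi \<phi>. \<forall>q\<in>epi \<phi>. ?N (p - (xbar, 0)) < \<delta>e \<longrightarrow> ?N (q - (xbar, 0)) < \<delta>e \<longrightarrow>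
      (INF r\<in>bouligand_cone (epi \<phi>) q. ereal (?N (p - q - r))) \<le> ereal (\<epsilon> * ?N (p - q))"
    using esh \<epsilon> x0 unfolding epi_shapiro_at_def shapiro_at_N_def by (simp add: zero_ereal_def) blast
  obtain dU where dU: "dU > 0" "ball xbar dU \<subseteq> U" using U(1,2) open_contains_ball by blast
  define \<delta> where "\<delta> = min \<delta>1 (min dU \<delta>e) / 2"
  have \<delta>: "\<delta> > 0" using d1 dU \<delta>e by (simp add: \<delta>_def)
  define \<tau>' where "\<tau>' = 5 + 5 * \<tau>"
  have \<tau>': "\<tau>' > 0" "\<tau>' \<ge> 1" using tau by (simp_all add: \<tau>'_def)
  have main: "edist_set z ?S \<le> ereal \<tau>' * max (\<phi> z) 0" if z: "z \<in> ball xbar \<delta>" for z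
  proof (cases "\<phi> z \<le> 0")
    case True
    then have "z \<in> ?S" by (simp add: sublevel0_def)
    then have "edist_set z ?S \<le> ereal (dist z z)" by (rule edist_le)
    also have "\<dots> = 0" by simp
    also have "0 \<le> ereal \<tau>' * max (\<phi> z) 0" using ereal_rhs_nonneg[OF \<tau>'(1)] .
    finally show ?thesis .
  next
    case False
    show ?thesis
    proof (cases "\<phi> z = \<infinity>")
      case True then show ?thesis using \<tau>' by simp
    next
      case False2: False
      with False obtain a where a: "\<phi> z = ereal a" "a > 0" by (cases "\<phi> z") auto
      have rhs: "ereal \<tau>' * max (\<phi> z) 0 = ereal (\<tau>' * a)" using a by (simp add: max_def)
      have dzx: "dist z xbar < \<delta>" using z by (simp add: dist_commute)
      show ?thesis
      proof (cases "a \<ge> \<delta>e / 2")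
        case True
        have "edist_set z ?S \<le> ereal (dist z xbar)" using edist_le xb by blast
        also have "dist z xbar \<le> \<tau>' * a"
        proof -
          have "dist z xbar < \<delta>e / 2" using dzx by (simp add: \<delta>_def)
          also have "\<delta>e / 2 \<le> a" using True .
          also have "a \<le> \<tau>' * a" using \<tau>'(2) a(2) by simp
          finally show ?thesis by simp
        qed
        finally show ?thesis using rhs by simp
      next
        case False3: False
        define \<kappa> :: real where "\<kappa> = 1/4"
        obtain u where uS: "u \<in> ?S" and uz: "dist z u \<le> dist z xbar"
          and ek: "\<forall>y\<in>?S. dist z u \<le> dist z y + \<kappa> * dist y u"
          using ekeland_dist[OF Scl xb, of \<kappa> z] by (auto simp: \<kappa>_def)
        have zS: "z \<notin> ?S" using a by (simp add: sublevel0_def)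
        define r where "r = norm (z - u)"
        have r0: "r > 0" using zS uS unfolding r_def by auto
        have uint: "u \<notin> interior ?S"
        proof
          assume "u \<in> interior ?S"
          then obtain e where e: "e > 0" "ball u e \<subseteq> ?S" using mem_interior by blast
          define s where "s = min (1/2) (e / (2 * r))"
          have s: "s > 0" "s \<le> 1/2" "s * r < e" using e r0
            by (auto simp: s_def min_def field_simps)
          define y where "y = u + s *\<^sub>R (z - u)"
          have yu: "dist y u = s * r" using s by (simp add: y_def r_def dist_norm)
          have "y \<in> ?S" using e(2) yu s(3) by (auto simp: dist_commute)
          then have "dist z u \<le> dist z y + \<kappa> * dist y u" using ek by blast
          moreover have "z - y = (1 - s) *\<^sub>R (z - u)" by (simp add: y_def algebra_simps)
          then have "dist z y = (1 - s) * r" using s by (simp add: dist_norm r_def)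
          ultimately have "r \<le> (1 - s) * r + \<kappa> * (s * r)" using yu by (simp add: dist_norm r_def)
          then have "s * r * (1 - \<kappa>) \<le> 0" by (simp add: algebra_simps)
          moreover have "s * r * (1 - \<kappa>) > 0" using s r0 by (simp add: \<kappa>_def)
          ultimately show False by simp
        qed
        have ufr: "u \<in> frontier ?S" using uint uS closure_subset unfolding frontier_def by auto
        have u0: "\<phi> u = 0" using fr ufr by auto
        have dux: "dist u xbar < 2 * \<delta>"
          using dist_triangle[of u xbar z] uz dzx by (simp add: dist_commute)
        have "2 * \<delta> \<le> \<delta>1" "2 * \<delta> \<le> dU" "2 * \<delta> \<le> \<delta>e" by (simp_all add: \<delta>_def)
        then have du1: "u \<in> ball xbar \<delta>1" and duU: "u \<in> U" and due: "norm (u - xbar) < \<delta>e"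
          using dux dU(2) by (auto simp: dist_commute dist_norm)
        have pe: "(z, a) \<in> epi \<phi>" using a by (simp add: epi_def)
        have qe: "(u, 0) \<in> epi \<phi>" using u0 by (simp add: epi_def)
        have "norm (z - xbar) + \<bar>a\<bar> < \<delta>e"
          using dzx False3 a(2) by (simp add: \<delta>_def dist_norm)
        then have A: "?N ((z, a) - (xbar, 0)) < \<delta>e" by simp
        have B: "?N ((u, 0) - (xbar, 0)) < \<delta>e" using due by simp
        have "(INF p\<in>bouligand_cone (epi \<phi>) (u, 0). ereal (?N ((z, a) - (u, 0) - p))) \<le> ereal (\<epsilon> * ?N ((z, a) - (u, 0)))"
          using shp[rule_format, OF pe qe A B] .
        also have "\<epsilon> * ?N ((z, a) - (u, 0)) = \<epsilon> * (r + a)" using a by (simp add: r_def)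
        also have "ereal (\<epsilon> * (r + a)) < ereal (\<epsilon> * (r + a) + a)" using a by simp
        finally obtain p where p: "p \<in> bouligand_cone (epi \<phi>) (u, 0)" "?N ((z, a) - (u, 0) - p) < \<epsilon> * (r + a) + a"
          by (auto simp: INF_less_iff)
        obtain w \<beta> where p_eq: "p = (w, \<beta>)" by (cases p)
        define D where "D = norm (z - u - w)"
        define Q where "Q = \<bar>a - \<beta>\<bar>"
        have DQ: "D + Q < \<epsilon> * (r + a) + a" using p(2) by (simp add: p_eq D_def Q_def)
        have hw: "hadamard_lower \<phi> u w \<le> ereal \<beta>" using epi_cone_deriv[of \<phi> u w \<beta>, OF u0] p(1) p_eq by simp
        have "edist_set w {v. hadamard_lower \<phi> u v \<le> 0} \<le> ereal \<tau> * max (hadamard_lower \<phi> u w) 0"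
          using db ufr du1 by blast
        also have "\<dots> \<le> ereal \<tau> * max (ereal \<beta>) 0"
          using max.mono[OF hw order_refl[of 0]] tau by (intro ereal_mult_left_mono) auto
        also have "\<dots> = ereal (\<tau> * max \<beta> 0)" by (simp add: max_def)
        also have "\<dots> < ereal (\<tau> * (a + Q) + a)"
        proof -
          have "max \<beta> 0 \<le> a + Q" using a(2) by (simp add: Q_def)
          then have "\<tau> * max \<beta> 0 \<le> \<tau> * (a + Q)" using tau by (simp add: mult_left_mono)
          then show ?thesis using a(2) by simp
        qed
        finally obtain w' where w': "hadamard_lower \<phi> u w' \<le> 0" "dist w w' < \<tau> * (a + Q) + a"
          using edist_lessD by blast
        have w'T: "w' \<in> bouligand_cone ?S u"
        proof (cases "hadamard_lower \<phi> u w' = 0")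
          case True then show ?thesis using U(3) duU ufr by blast
        next
          case False then show ?thesis using neg_deriv_tangent[of \<phi> u, OF u0] w'(1) by simp
        qed
        have ekt: "r \<le> norm (z - u - w') + \<kappa> * norm w'"
          using ekeland_tangent[OF ek _ w'T] by (simp add: \<kappa>_def r_def)
        define W where "W = norm (w - w')"
        define X where "X = norm (z - u - w')"
        have X: "X \<le> D + W"
          using norm_triangle_ineq[of "z - u - w" "w - w'"] by (simp add: X_def D_def W_def)
        have nw': "norm w' \<le> r + X"
          using norm_triangle_ineq[of "z - u" "-(z - u - w')"] by (simp add: X_def r_def norm_minus_commute)
        have W: "W < \<tau> * a + \<tau> * Q + a" using w'(2) by (simp add: W_def dist_norm algebra_simps)
        have DQ2: "(1 + \<tau>) * (D + Q) < (1 + \<tau>) * (\<epsilon> * (r + a) + a)"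
          using DQ tau by (intro mult_strict_left_mono) auto
        have "(1 + \<tau>) * (\<epsilon> * (r + a) + a) = ((1 + \<tau>) * \<epsilon>) * (r + a) + (1 + \<tau>) * a"
          by (simp add: algebra_simps)
        also have "\<dots> = (r + a) / 8 + a + \<tau> * a" unfolding \<epsilon>1 by (simp add: algebra_simps)
        finally have DQ3: "(1 + \<tau>) * (\<epsilon> * (r + a) + a) = (r + a) / 8 + a + \<tau> * a" .
        have tDQ: "\<tau> * D \<ge> 0" "Q \<ge> 0" using tau by (simp_all add: D_def Q_def)
        have DQ4: "(1 + \<tau>) * (D + Q) = D + Q + \<tau> * D + \<tau> * Q" by (simp add: algebra_simps)
        have "\<kappa> * norm w' \<le> \<kappa> * (r + X)" using nw' by (intro mult_left_mono) (auto simp: \<kappa>_def)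
        then have rX: "r \<le> X + (1/4) * (r + X)" using ekt unfolding X_def \<kappa>_def by linarith
        have ta: "\<tau>' * a = 5 * a + 5 * (\<tau> * a)" by (simp add: \<tau>'_def algebra_simps)
        have rfin: "r < \<tau>' * a"
        proof -
          have C: "D + Q + \<tau> * D + \<tau> * Q < (r + a) / 8 + a + \<tau> * a"
            using DQ2 unfolding DQ3 DQ4 .
          have 1: "X < (r + a) / 8 + a + \<tau> * a + \<tau> * a + a" using X W C tDQ by linarith
          have 2: "8 * X < r + 17 * a + 16 * (\<tau> * a)" using 1 by (simp add: field_simps)
          have 3: "3 * r \<le> 5 * X" using rX by (simp add: field_simps)
          have 4: "19 * r < 85 * a + 80 * (\<tau> * a)" using 2 3 by linarith
          show ?thesis using 4 a(2) ta mult_pos_pos[OF tau a(2)] by linarith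
        qed
        have "edist_set z ?S \<le> ereal (dist z u)" using edist_le uS by blast
        also have "dist z u = r" by (simp add: r_def dist_norm)
        finally have "edist_set z ?S \<le> ereal r" .
        also have "ereal r \<le> ereal (\<tau>' * a)" using rfin by simp
        finally show ?thesis using rhs by simp
      qed
    qed
  qed
  show ?thesis unfolding local_error_bound_def using \<tau>'(1) \<delta> main by blast
qed


theorem corollary4p1:
  fixes \<phi> :: "'a::banach \<Rightarrow> ereal" and xbar :: 'a
  assumes "proper_fun \<phi>" and "lsc_fun \<phi>"
    and "xbar \<in> sublevel0 \<phi>"
    and "frontier (sublevel0 \<phi>) \<subseteq> \<phi> -` {0}"
    and "epi_shapiro_at \<phi> xbar"
    and "shapiro_around (sublevel0 \<phi>) xbar"
  shows
    "(\<forall>\<tau> \<delta>\<^sub>0. \<tau> > 0 \<longrightarrow> \<delta>\<^sub>0 > 0 \<longrightarrow>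
        (\<forall>x\<in>ball xbar \<delta>\<^sub>0. edist_set x (sublevel0 \<phi>) \<le> ereal \<tau> * max (\<phi> x) 0) \<longrightarrow>
        (\<exists>\<delta>>0. \<forall>x\<in>frontier (sublevel0 \<phi>) \<inter> ball xbar \<delta>. \<forall>h.
            edist_set h {u. hadamard_lower \<phi> x u \<le> 0}
              \<le> ereal \<tau> * max (hadamard_lower \<phi> x h) 0))
   \<and>
    ((\<exists>U. open U \<and> xbar \<in> U \<and> (\<forall>x\<in>U \<inter> frontier (sublevel0 \<phi>).
         {h. hadamard_lower \<phi> x h = 0} \<subseteq> bouligand_cone (sublevel0 \<phi>) x)) \<longrightarrow>
     (local_error_bound \<phi> xbar \<longleftrightarrow>
       (\<exists>\<tau>>0. \<exists>\<delta>>0. \<forall>x\<in>frontier (sublevel0 \<phi>) \<inter> ball xbar \<delta>. \<forall>h.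
            edist_set h {u. hadamard_lower \<phi> x u \<le> 0}
              \<le> ereal \<tau> * max (hadamard_lower \<phi> x h) 0)))"
  proof -
  have nm: "\<forall>y. \<phi> y \<noteq> -\<infinity>" using assms(1) by (simp add: proper_fun_def)
  have P1: "\<exists>\<delta>>0. \<forall>x\<in>frontier (sublevel0 \<phi>) \<inter> ball xbar \<delta>. \<forall>h.
            edist_set h {u. hadamard_lower \<phi> x u \<le> 0}
              \<le> ereal \<tau> * max (hadamard_lower \<phi> x h) 0"
    if "\<tau> > 0" "\<delta>\<^sub>0 > 0"
       "\<forall>x\<in>ball xbar \<delta>\<^sub>0. edist_set x (sublevel0 \<phi>) \<le> ereal \<tau> * max (\<phi> x) 0" for \<tau> \<delta>\<^sub>0
    using part_i[OF assms(4) assms(6) nm that] .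
  show ?thesis
  proof (intro conjI impI allI)
    fix \<tau> \<delta>\<^sub>0 :: real
    assume "\<tau> > 0" "\<delta>\<^sub>0 > 0"
       "\<forall>x\<in>ball xbar \<delta>\<^sub>0. edist_set x (sublevel0 \<phi>) \<le> ereal \<tau> * max (\<phi> x) 0"
    then show "\<exists>\<delta>>0. \<forall>x\<in>frontier (sublevel0 \<phi>) \<inter> ball xbar \<delta>. \<forall>h.
            edist_set h {u. hadamard_lower \<phi> x u \<le> 0}
              \<le> ereal \<tau> * max (hadamard_lower \<phi> x h) 0" using P1 by blast
  next
    assume "\<exists>U. open U \<and> xbar \<in> U \<and> (\<forall>x\<in>U \<inter> frontier (sublevel0 \<phi>).
         {h. hadamard_lower \<phi> x h = 0} \<subseteq> bouligand_cone (sublevel0 \<phi>) x)"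
    then obtain U where U: "open U" "xbar \<in> U" "\<forall>x\<in>U \<inter> frontier (sublevel0 \<phi>).
         {h. hadamard_lower \<phi> x h = 0} \<subseteq> bouligand_cone (sublevel0 \<phi>) x" by blast
    show "local_error_bound \<phi> xbar \<longleftrightarrow>
       (\<exists>\<tau>>0. \<exists>\<delta>>0. \<forall>x\<in>frontier (sublevel0 \<phi>) \<inter> ball xbar \<delta>. \<forall>h.
            edist_set h {u. hadamard_lower \<phi> x u \<le> 0}
              \<le> ereal \<tau> * max (hadamard_lower \<phi> x h) 0)"
    proof
      assume "local_error_bound \<phi> xbar"
      then obtain \<tau> \<delta> where "\<tau> > 0" "\<delta> > 0"
        "\<forall>x\<in>ball xbar \<delta>. edist_set x (sublevel0 \<phi>) \<le> ereal \<tau> * max (\<phi> x) 0"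
        unfolding local_error_bound_def by blast
      then show "\<exists>\<tau>>0. \<exists>\<delta>>0. \<forall>x\<in>frontier (sublevel0 \<phi>) \<inter> ball xbar \<delta>. \<forall>h.
            edist_set h {u. hadamard_lower \<phi> x u \<le> 0}
              \<le> ereal \<tau> * max (hadamard_lower \<phi> x h) 0" using P1 by blast
    next
      assume "\<exists>\<tau>>0. \<exists>\<delta>>0. \<forall>x\<in>frontier (sublevel0 \<phi>) \<inter> ball xbar \<delta>. \<forall>h.
            edist_set h {u. hadamard_lower \<phi> x u \<le> 0}
              \<le> ereal \<tau> * max (hadamard_lower \<phi> x h) 0"
      then obtain \<tau> \<delta> where t: "\<tau> > 0" "\<delta> > 0" "\<forall>x\<in>frontier (sublevel0 \<phi>) \<inter> ball xbar \<delta>. \<forall>h.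
            edist_set h {u. hadamard_lower \<phi> x u \<le> 0}
              \<le> ereal \<tau> * max (hadamard_lower \<phi> x h) 0" by blast
      show "local_error_bound \<phi> xbar"
        by (rule part_ii_rev[OF assms(2) assms(3) assms(4) assms(5) U t])
    qed
  qed
qed

end
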